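(* Let $X$ be a Hausdorff locally compact space. If $X$ is homeomorphic to the topological coproduct of an infinite family of compact spaces, then $X$ has infinitely many pairwise non-equivalent compactifications.
   Context: A compactification of $X$ is a compact Hausdorff space containing $X$ as a dense subspace; two compactifications are equivalent if there is a homeomorphism between them restricting to the identity on $X$. *)

theory Defs
  imports "HOL-Analysis.Analysis"
begin

definition compactification :: "'a topology \<Rightarrow> 'b topology \<Rightarrow> ('a \<Rightarrow> 'b) \<Rightarrow> bool" where
  "compactification X Y e \<longleftrightarrow>
     compact_space Y \<and> Hausdorff_space Y \<and> embedding_map X Y e \<and>
     Y closure_of (e ` topspace X) = topspace Y"

definition equivalent_compactifications ::
  "'a topology \<Rightarrow> 'b topology \<Rightarrow> ('a \<Rightarrow> 'b) \<Rightarrow> 'c topology \<Rightarrow> ('a \<Rightarrow> 'c) \<Rightarrow> bool" where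
  "equivalent_compactifications X Y1 e1 Y2 e2 \<longleftrightarrow>
     (\<exists>h. homeomorphic_map Y1 Y2 h \<and> (\<forall>x\<in>topspace X. h (e1 x) = e2 x))"

end

theory Submission
  imports Defs
begin

locale npt =
  fixes X :: "'a topology" and CC :: "'a set set"
  assumes haus: "Hausdorff_space X" and lc: "locally_compact_space X"
   and fin: "finite CC" and cover: "\<Union>CC = topspace X"
   and disj: "pairwise disjnt CC"
   and opn: "\<And>C. C \<in> CC \<Longrightarrow> openin X C"
   and ncpt: "\<And>C. C \<in> CC \<Longrightarrow> \<not> compactin X C"
begin

definition "S = (\<lambda>x. {{x}}) ` topspace X \<union> (\<lambda>C. {C}) ` CC"
definition "pre W = {x. {{x}} \<in> W}"
definition "OP W \<longleftrightarrow> W \<subseteq> S \<and> openin X (pre W) \<and> (\<forall>C\<in>CC. {C} \<in> W \<longrightarrow> compactin X (C - pre W))"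
definition "Y = topology OP"

lemma C_sub: "C \<in> CC \<Longrightarrow> C \<subseteq> topspace X"
  using cover by blast

lemma C_nsing: "C \<in> CC \<Longrightarrow> C \<noteq> {x}"
proof
  assume C: "C \<in> CC" and e: "C = {x}"
  then have "x \<in> topspace X" using C_sub[OF C] by simp
  then have "compactin X C" using e by simp
  then show False using ncpt[OF C] by simp
qed

lemma C_ne: "C \<in> CC \<Longrightarrow> C \<noteq> {}"
proof
  assume C: "C \<in> CC" and e: "C = {}"
  then show False using ncpt[OF C] by simp
qed

lemma ist: "istopology OP"
  unfolding istopology_def
proof (intro conjI allI impI)
  fix A B assume A: "OP A" and B: "OP B"
  have pAB: "pre (A \<inter> B) = pre A \<inter> pre B" by (auto simp: pre_def)
  show "OP (A \<inter> B)"
    unfolding OP_def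
  proof (intro conjI ballI impI)
    show "A \<inter> B \<subseteq> S" using A by (auto simp: OP_def)
    show "openin X (pre (A \<inter> B))" using A B by (auto simp: OP_def pAB)
    fix C assume "C \<in> CC" "{C} \<in> A \<inter> B"
    then have "compactin X (C - pre A)" "compactin X (C - pre B)" using A B by (auto simp: OP_def)
    then have "compactin X ((C - pre A) \<union> (C - pre B))" by (rule compactin_Un)
    moreover have "(C - pre A) \<union> (C - pre B) = C - pre (A \<inter> B)" by (auto simp: pAB)
    ultimately show "compactin X (C - pre (A \<inter> B))" by simp
  qed
next
  fix K assume K: "\<forall>A\<in>K. OP A"
  have pK: "pre (\<Union>K) = (\<Union>A\<in>K. pre A)" by (auto simp: pre_def)
  show "OP (\<Union>K)"
    unfolding OP_def
  proof (intro conjI ballI impI)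
    show "\<Union>K \<subseteq> S" using K by (auto simp: OP_def)
    show "openin X (pre (\<Union>K))" using K by (auto simp: OP_def pK)
    fix C assume C: "C \<in> CC" "{C} \<in> \<Union>K"
    then obtain A where A: "A \<in> K" "{C} \<in> A" by blast
    then have cA: "compactin X (C - pre A)" using K C by (auto simp: OP_def)
    have "closedin X (topspace X - pre (\<Union>K))"
      using K by (auto simp: OP_def pK)
    then have "compactin X ((C - pre A) \<inter> (topspace X - pre (\<Union>K)))"
      by (rule compact_Int_closedin[OF cA])
    moreover have "(C - pre A) \<inter> (topspace X - pre (\<Union>K)) = C - pre (\<Union>K)"
      using C_sub[OF C(1)] A by (auto simp: pre_def)
    ultimately show "compactin X (C - pre (\<Union>K))" by simp
  qed
qed

lemma openY: "openin Y = OP"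
  by (simp add: Y_def ist)

lemma pre_S: "pre S = topspace X"
  using C_sub by (auto simp: pre_def S_def)

lemma OP_S: "OP S"
proof -
  have "\<And>C. C \<in> CC \<Longrightarrow> C - topspace X = {}" using C_sub by blast
  then show ?thesis unfolding OP_def pre_S by (simp add: Diff_eq_empty_iff[THEN iffD2] C_sub)
qed

lemma topY: "topspace Y = S"
proof (rule antisym)
  have "\<And>W. OP W \<Longrightarrow> W \<subseteq> S" by (simp add: OP_def)
  then show "topspace Y \<subseteq> S" unfolding topspace_def openY by blast
  have "openin Y S" by (simp add: openY OP_S)
  then show "S \<subseteq> topspace Y" by (rule openin_subset)
qed

lemma pre_img: "U \<subseteq> topspace X \<Longrightarrow> pre ((\<lambda>x. {{x}}) ` U) = U"
  by (auto simp: pre_def)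

lemma open_img: "openin X U \<Longrightarrow> openin Y ((\<lambda>x. {{x}}) ` U)"
proof -
  assume U: "openin X U"
  have sub: "U \<subseteq> topspace X" using openin_subset[OF U] .
  have "\<not> {C} \<in> (\<lambda>x. {{x}}) ` U" if "C \<in> CC" for C
    using C_nsing[OF that] by blast
  moreover have "(\<lambda>x. {{x}}) ` U \<subseteq> S" using sub unfolding S_def by blast
  ultimately show ?thesis unfolding openY OP_def pre_img[OF sub] using U by blast
qed

lemma pre_sub: "OP W \<Longrightarrow> pre W \<subseteq> topspace X"
  unfolding OP_def using openin_subset by blast

lemma cont: "continuous_map X Y (\<lambda>x. {{x}})"
  unfolding continuous_map_def
proof (intro conjI allI impI)
  show "(\<lambda>x. {{x}}) \<in> topspace X \<rightarrow> topspace Y" unfolding topY S_def by blast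
  fix W assume W: "openin Y W"
  then have "OP W" by (simp add: openY)
  then have "{x \<in> topspace X. {{x}} \<in> W} = pre W" using pre_sub unfolding pre_def by blast
  then show "openin X {x \<in> topspace X. {{x}} \<in> W}" using \<open>OP W\<close> by (simp add: OP_def)
qed

lemma emb: "embedding_map X Y (\<lambda>x. {{x}})"
proof (rule injective_open_imp_embedding_map[OF cont])
  show "open_map X Y (\<lambda>x. {{x}})" unfolding open_map_def using open_img by blast
  show "inj_on (\<lambda>x. {{x}}) (topspace X)" by (auto simp: inj_on_def)
qed

lemma C_closed: "C \<in> CC \<Longrightarrow> closedin X C"
proof -
  assume C: "C \<in> CC"
  have "topspace X - C = \<Union>(CC - {C})"
  proof
    show "topspace X - C \<subseteq> \<Union>(CC - {C})" using cover by blast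
    show "\<Union>(CC - {C}) \<subseteq> topspace X - C"
    proof
      fix x assume "x \<in> \<Union>(CC - {C})"
      then obtain D where D: "D \<in> CC" "D \<noteq> C" "x \<in> D" by blast
      then have "disjnt D C" using disj C unfolding pairwise_def by blast
      then show "x \<in> topspace X - C" using D C_sub[OF D(1)] unfolding disjnt_def by blast
    qed
  qed
  moreover have "openin X (\<Union>(CC - {C}))" using opn by blast
  ultimately show ?thesis unfolding closedin_def using C_sub[OF C] by simp
qed

lemma block_open: "C \<in> CC \<Longrightarrow> openin Y ((\<lambda>x. {{x}}) ` C \<union> {{C}})"
proof -
  assume C: "C \<in> CC"
  let ?W = "(\<lambda>x. {{x}}) ` C \<union> {{C}}"
  have nC: "\<And>D x. D \<in> CC \<Longrightarrow> {D} \<noteq> {{x}}" using C_nsing by blast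
  have p: "pre ?W = C" unfolding pre_def using nC[OF C] by auto
  have "?W \<subseteq> S" unfolding S_def using C C_sub[OF C] by blast
  moreover have "\<forall>D\<in>CC. {D} \<in> ?W \<longrightarrow> compactin X (D - pre ?W)"
  proof (intro ballI impI)
    fix D assume D: "D \<in> CC" "{D} \<in> ?W"
    then have "D = C" using nC[OF D(1)] by blast
    then show "compactin X (D - pre ?W)" unfolding p by simp
  qed
  ultimately show ?thesis unfolding openY OP_def p using opn[OF C] by blast
qed

lemma sep_pt_C:
  assumes x: "x \<in> topspace X" and C: "C \<in> CC"
  shows "\<exists>U V. openin Y U \<and> openin Y V \<and> {{x}} \<in> U \<and> {C} \<in> V \<and> disjnt U V"
proof -
  obtain U0 K where U0: "openin X U0" "compactin X K" "x \<in> U0" "U0 \<subseteq> K"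
    using lc x unfolding locally_compact_space_def by blast
  have Kc: "closedin X K" using compactin_imp_closedin[OF haus U0(2)] .
  have KT: "K \<subseteq> topspace X" using Kc closedin_subset by blast
  let ?V = "S - (\<lambda>x. {{x}}) ` K"
  have pV: "pre ?V = topspace X - K" unfolding pre_def S_def using C_nsing by auto
  have "OP ?V" unfolding OP_def pV
  proof (intro conjI ballI impI)
    show "?V \<subseteq> S" by blast
    show "openin X (topspace X - K)" using Kc by (simp add: closedin_def)
    fix D assume D: "D \<in> CC" "{D} \<in> ?V"
    have "D - (topspace X - K) = D \<inter> K" using C_sub[OF D(1)] by blast
    then show "compactin X (D - (topspace X - K))"
      using closed_Int_compactin[OF C_closed[OF D(1)] U0(2)] by simp
  qed
  moreover have "{C} \<in> ?V"
  proof -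
    have "{C} \<notin> (\<lambda>x. {{x}}) ` K" using C_nsing[OF C] by auto
    then show ?thesis unfolding S_def using C by blast
  qed
  moreover have "disjnt ((\<lambda>x. {{x}}) ` U0) ?V" using U0(4) unfolding disjnt_def by blast
  ultimately have f1: "openin Y ?V" "{C} \<in> ?V" "disjnt ((\<lambda>x. {{x}}) ` U0) ?V" by (simp_all add: openY)
  have f2: "openin Y ((\<lambda>x. {{x}}) ` U0)" "{{x}} \<in> (\<lambda>x. {{x}}) ` U0"
    using open_img[OF U0(1)] U0(3) by auto
  show ?thesis
    apply (rule exI[of _ "(\<lambda>x. {{x}}) ` U0"], rule exI[of _ ?V])
    using f1 f2 by simp
qed

lemma haus_Y: "Hausdorff_space Y"
  unfolding Hausdorff_space_def topY
proof (intro allI impI)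
  fix p q assume pq: "p \<in> S \<and> q \<in> S \<and> p \<noteq> q"
  have nC: "\<And>D x. D \<in> CC \<Longrightarrow> {D} \<noteq> {{x}}" using C_nsing by auto
  show "\<exists>U V. openin Y U \<and> openin Y V \<and> p \<in> U \<and> q \<in> V \<and> disjnt U V"
  proof (cases "p \<in> (\<lambda>x. {{x}}) ` topspace X")
    case True
    then obtain x where x: "x \<in> topspace X" "p = {{x}}" by blast
    show ?thesis
    proof (cases "q \<in> (\<lambda>x. {{x}}) ` topspace X")
      case True
      then obtain y where y: "y \<in> topspace X" "q = {{y}}" by blast
      have "x \<noteq> y" using pq x y by blast
      then obtain U V where UV: "openin X U" "openin X V" "x \<in> U" "y \<in> V" "disjnt U V"
        using haus x y unfolding Hausdorff_space_def by blast
      have "disjnt ((\<lambda>x. {{x}}) ` U) ((\<lambda>x. {{x}}) ` V)" using UV(5) unfolding disjnt_def by blast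
      moreover have "p \<in> (\<lambda>x. {{x}}) ` U" "q \<in> (\<lambda>x. {{x}}) ` V" using UV(3,4) x y by auto
      ultimately show ?thesis
        apply (rule_tac exI[of _ "(\<lambda>x. {{x}}) ` U"], rule_tac exI[of _ "(\<lambda>x. {{x}}) ` V"])
        using open_img[OF UV(1)] open_img[OF UV(2)] by simp
    next
      case False
      then obtain C where C: "C \<in> CC" "q = {C}" using pq unfolding S_def by blast
      show ?thesis using sep_pt_C[OF x(1) C(1)] unfolding x(2) C(2) .
    qed
  next
    case False
    then obtain C where C: "C \<in> CC" "p = {C}" using pq unfolding S_def by blast
    show ?thesis
    proof (cases "q \<in> (\<lambda>x. {{x}}) ` topspace X")
      case True
      then obtain y where y: "y \<in> topspace X" "q = {{y}}" by blast
      obtain U V where "openin Y U" "openin Y V" "{{y}} \<in> U" "{C} \<in> V" "disjnt U V"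
        using sep_pt_C[OF y(1) C(1)] by blast
      then have "disjnt V U" by (simp add: disjnt_sym)
      then show ?thesis
        apply (rule_tac exI[of _ V], rule_tac exI[of _ U])
        using \<open>openin Y U\<close> \<open>openin Y V\<close> \<open>{{y}} \<in> U\<close> \<open>{C} \<in> V\<close> unfolding y(2) C(2) by simp
    next
      case False
      then obtain D where D: "D \<in> CC" "q = {D}" using pq unfolding S_def by blast
      have CD: "C \<noteq> D" using pq C D by blast
      then have dj: "disjnt C D" using disj C D unfolding pairwise_def by blast
      have "disjnt ((\<lambda>x. {{x}}) ` C \<union> {{C}}) ((\<lambda>x. {{x}}) ` D \<union> {{D}})"
        using dj CD nC[OF C(1)] nC[OF D(1)] unfolding disjnt_def by auto
      moreover have "p \<in> (\<lambda>x. {{x}}) ` C \<union> {{C}}" "q \<in> (\<lambda>x. {{x}}) ` D \<union> {{D}}" using C D by auto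
      ultimately show ?thesis
        apply (rule_tac exI[of _ "(\<lambda>x. {{x}}) ` C \<union> {{C}}"], rule_tac exI[of _ "(\<lambda>x. {{x}}) ` D \<union> {{D}}"])
        using block_open[OF C(1)] block_open[OF D(1)] by simp
    qed
  qed
qed

lemma dense_Y: "Y closure_of ((\<lambda>x. {{x}}) ` topspace X) = topspace Y"
proof (rule antisym)
  show "Y closure_of ((\<lambda>x. {{x}}) ` topspace X) \<subseteq> topspace Y" by (rule closure_of_subset_topspace)
  have eT: "(\<lambda>x. {{x}}) ` topspace X \<subseteq> topspace Y" unfolding topY S_def by blast
  show "topspace Y \<subseteq> Y closure_of ((\<lambda>x. {{x}}) ` topspace X)"
  proof
    fix p assume p: "p \<in> topspace Y"
    show "p \<in> Y closure_of ((\<lambda>x. {{x}}) ` topspace X)"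
    proof (cases "p \<in> (\<lambda>x. {{x}}) ` topspace X")
      case True
      then show ?thesis using closure_of_subset[OF eT] by blast
    next
      case False
      then obtain C where C: "C \<in> CC" "p = {C}" using p unfolding topY S_def by blast
      show ?thesis unfolding in_closure_of
      proof (intro conjI allI impI)
        show "p \<in> topspace Y" by fact
        fix W assume W: "p \<in> W \<and> openin Y W"
        then have OW: "OP W" by (simp add: openY)
        then have cW: "compactin X (C - pre W)" using W C unfolding OP_def by blast
        show "\<exists>y. y \<in> (\<lambda>x. {{x}}) ` topspace X \<and> y \<in> W"
        proof (rule ccontr)
          assume "\<not> ?thesis"
          then have "C \<inter> pre W = {}" using C_sub[OF C(1)] unfolding pre_def by blast
          then have "C - pre W = C" by blast
          then show False using cW ncpt[OF C(1)] by simp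
        qed
      qed
    qed
  qed
qed

lemma compact_Y: "compact_space Y"
  unfolding compact_space_alt topY
proof (intro allI impI)
  fix UU assume UU: "(\<forall>U\<in>UU. openin Y U) \<and> S \<subseteq> \<Union>UU"
  have UO: "\<forall>U\<in>UU. OP U" using UU by (simp add: openY)
  have "\<forall>C\<in>CC. \<exists>W. W \<in> UU \<and> {C} \<in> W"
  proof
    fix C assume "C \<in> CC"
    then have "{C} \<in> S" unfolding S_def by blast
    then have "{C} \<in> \<Union>UU" using UU by blast
    then show "\<exists>W. W \<in> UU \<and> {C} \<in> W" by blast
  qed
  then have "\<exists>W. \<forall>C\<in>CC. W C \<in> UU \<and> {C} \<in> W C" by (rule bchoice)
  then obtain W where W0: "\<forall>C\<in>CC. W C \<in> UU \<and> {C} \<in> W C" ..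
  then have W: "\<And>C. C \<in> CC \<Longrightarrow> W C \<in> UU \<and> {C} \<in> W C" by blast
  let ?K = "\<Union>C\<in>CC. C - pre (W C)"
  have "compactin X ?K"
  proof (rule compactin_Union)
    show "finite ((\<lambda>C. C - pre (W C)) ` CC)" using fin by simp
    fix A assume "A \<in> (\<lambda>C. C - pre (W C)) ` CC"
    then obtain C where C: "C \<in> CC" "A = C - pre (W C)" by blast
    have "OP (W C)" using W[OF C(1)] UO by blast
    then show "compactin X A" using C W[OF C(1)] unfolding OP_def by blast
  qed
  moreover have "\<forall>V\<in>pre ` UU. openin X V" using UO unfolding OP_def by blast
  moreover have "?K \<subseteq> \<Union>(pre ` UU)"
  proof
    fix x assume "x \<in> ?K"
    then have "x \<in> topspace X" using C_sub by blast
    then have "{{x}} \<in> \<Union>UU" using UU unfolding S_def by blast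
    then show "x \<in> \<Union>(pre ` UU)" unfolding pre_def by blast
  qed
  ultimately obtain F where F: "finite F" "F \<subseteq> pre ` UU" "?K \<subseteq> \<Union>F"
    unfolding compactin_def by meson
  then obtain G where G: "G \<subseteq> UU" "finite G" "F = pre ` G" using finite_subset_image by metis
  show "\<exists>F. finite F \<and> F \<subseteq> UU \<and> S \<subseteq> \<Union>F"
  proof (intro exI conjI)
    show "finite (G \<union> W ` CC)" using G fin by simp
    show "G \<union> W ` CC \<subseteq> UU" using G W by blast
    show "S \<subseteq> \<Union>(G \<union> W ` CC)"
    proof
      fix p assume "p \<in> S"
      then consider x where "x \<in> topspace X" "p = {{x}}" | C where "C \<in> CC" "p = {C}"
        unfolding S_def by blast
      then show "p \<in> \<Union>(G \<union> W ` CC)"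
      proof cases
        case 1
        then obtain C where C: "C \<in> CC" "x \<in> C" using cover by blast
        show ?thesis
        proof (cases "x \<in> pre (W C)")
          case True
          then show ?thesis using 1 C unfolding pre_def by blast
        next
          case False
          then have "x \<in> ?K" using C by blast
          then obtain V where "V \<in> G" "x \<in> pre V" using F G by blast
          then show ?thesis using 1 unfolding pre_def by blast
        qed
      next
        case 2
        then show ?thesis using W by blast
      qed
    qed
  qed
qed

lemma compactification_Y: "compactification X Y (\<lambda>x. {{x}})"
  unfolding compactification_def using compact_Y haus_Y emb dense_Y by blast

lemma E_sub: "(\<lambda>x. {{x}}) ` topspace X \<subseteq> topspace Y"
  unfolding topY S_def by (rule Un_upper1)

lemma rem_Y: "topspace Y - (\<lambda>x. {{x}}) ` topspace X = (\<lambda>C. {C}) ` CC"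
  unfolding topY S_def using C_nsing by blast

lemma card_rem: "card (topspace Y - (\<lambda>x. {{x}}) ` topspace X) = card CC"
  unfolding rem_Y by (rule card_image) (auto simp: inj_on_def)

end

lemma sum_piece_open:
  assumes "J \<subseteq> I"
  shows "openin (sum_topology K I) (Sigma J (topspace \<circ> K))"
  unfolding openin_sum_topology
proof (intro conjI ballI)
  show "Sigma J (topspace \<circ> K) \<subseteq> Sigma I (topspace \<circ> K)" using assms by auto
  fix i assume "i \<in> I"
  have "{x. (i, x) \<in> Sigma J (topspace \<circ> K)} = (if i \<in> J then topspace (K i) else {})" by auto
  then show "openin (K i) {x. (i, x) \<in> Sigma J (topspace \<circ> K)}" by simp
qed

lemma sum_piece_noncompact:
  assumes J: "infinite J" "J \<subseteq> I" and ne: "\<forall>i\<in>I. topspace (K i) \<noteq> {}"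
  shows "\<not> compactin (sum_topology K I) (Sigma J (topspace \<circ> K))"
proof
  assume c: "compactin (sum_topology K I) (Sigma J (topspace \<circ> K))"
  let ?U = "(\<lambda>i. {i} \<times> topspace (K i)) ` J"
  have "\<forall>U\<in>?U. openin (sum_topology K I) U"
  proof
    fix U assume "U \<in> ?U"
    then obtain i where i: "i \<in> J" "U = {i} \<times> topspace (K i)" by blast
    have "U = Sigma {i} (topspace \<circ> K)" using i by auto
    then show "openin (sum_topology K I) U" using sum_piece_open[of "{i}" I K] i J by auto
  qed
  moreover have "Sigma J (topspace \<circ> K) \<subseteq> \<Union>?U" by auto
  ultimately obtain F where F: "finite F" "F \<subseteq> ?U" "Sigma J (topspace \<circ> K) \<subseteq> \<Union>F"
    using c unfolding compactin_def by meson
  then obtain J' where J': "J' \<subseteq> J" "finite J'" "F = (\<lambda>i. {i} \<times> topspace (K i)) ` J'"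
    using finite_subset_image[OF F(1) F(2)] by blast
  have "J - J' \<noteq> {}"
  proof
    assume "J - J' = {}"
    then have "J \<subseteq> J'" by blast
    then show False using finite_subset J'(2) J(1) by blast
  qed
  then obtain i where i: "i \<in> J" "i \<notin> J'" by blast
  then obtain a where a: "a \<in> topspace (K i)" using ne J by blast
  then have "(i, a) \<in> Sigma J (topspace \<circ> K)" using i by simp
  then have "(i, a) \<in> \<Union>F" using F(3) by blast
  then show False using J'(3) i by auto
qed

lemma infinite_mod_class:
  assumes "j < Suc n"
  shows "infinite {k::nat. k mod Suc n = j}"
proof
  assume "finite {k::nat. k mod Suc n = j}"
  then obtain m where m: "\<forall>k\<in>{k::nat. k mod Suc n = j}. k \<le> m"
    unfolding finite_nat_set_iff_bounded_le by blast
  have "(j + Suc n * Suc m) mod Suc n = j mod Suc n" by (rule mod_mult_self2)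
  also have "\<dots> = j" using assms by simp
  finally have "(j + Suc n * Suc m) mod Suc n = j" .
  then have "j + Suc n * Suc m \<le> m" using m by blast
  moreover have "Suc m \<le> Suc n * Suc m" by simp
  ultimately show False by linarith
qed

lemma partition_exists:
  fixes X :: "'a topology" and K :: "'i \<Rightarrow> 'c topology" and I :: "'i set"
  assumes "Hausdorff_space X" and "locally_compact_space X"
    and "infinite I"
    and "\<forall>i\<in>I. compact_space (K i) \<and> topspace (K i) \<noteq> {}"
    and "X homeomorphic_space sum_topology K I"
  shows "\<exists>CC. npt X CC \<and> card CC = Suc n"
proof -
  have "sum_topology K I homeomorphic_space X" using assms(5) homeomorphic_space_sym by blast
  then obtain f where f: "homeomorphic_map (sum_topology K I) X f" unfolding homeomorphic_space by blast
  obtain g :: "nat \<Rightarrow> 'i" where g: "inj g" "range g \<subseteq> I" using infinite_countable_subset assms(3) by blast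
  define c where "c i = (if i \<in> range g then inv g i mod Suc n else 0)" for i
  define D where "D j = f ` Sigma {i\<in>I. c i = j} (topspace \<circ> K)" for j
  define CC where "CC = D ` {..<Suc n}"
  have ne: "\<forall>i\<in>I. topspace (K i) \<noteq> {}" using assms(4) by blast
  have cl: "\<And>i. c i < Suc n" by (simp add: c_def)
  have inf: "infinite {i\<in>I. c i = j}" if j: "j < Suc n" for j
  proof -
    have "g ` {k. k mod Suc n = j} \<subseteq> {i\<in>I. c i = j}"
    proof
      fix i assume "i \<in> g ` {k. k mod Suc n = j}"
      then obtain k where k: "k mod Suc n = j" "i = g k" by blast
      then have "c i = j" using inv_f_f[OF g(1)] by (simp add: c_def)
      then show "i \<in> {i\<in>I. c i = j}" using g(2) k(2) by blast
    qed
    moreover have "infinite (g ` {k. k mod Suc n = j})"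
      using infinite_mod_class[OF j] finite_imageD g(1) inj_on_subset by (metis subset_UNIV)
    ultimately show ?thesis using finite_subset by blast
  qed
  have topX: "f ` Sigma I (topspace \<circ> K) = topspace X"
    using homeomorphic_imp_surjective_map[OF f] by simp
  have injf: "inj_on f (Sigma I (topspace \<circ> K))"
    using homeomorphic_imp_injective_map[OF f] by simp
  have Ssub: "Sigma {i\<in>I. c i = j} (topspace \<circ> K) \<subseteq> topspace (sum_topology K I)" for j by auto
  have Dopen: "openin X (D j)" for j
    unfolding D_def using homeomorphic_map_openness[OF f Ssub] sum_piece_open[of "{i\<in>I. c i = j}" I K] by auto
  have Dnc: "\<not> compactin X (D j)" if "j < Suc n" for j
    unfolding D_def using homeomorphic_map_compactness[OF f Ssub]
      sum_piece_noncompact[OF inf[OF that] _ ne] by auto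
  have Ddisj: "D j \<inter> D k = {}" if "j \<noteq> k" for j k
  proof -
    have "D j \<inter> D k = f ` (Sigma {i\<in>I. c i = j} (topspace \<circ> K) \<inter> Sigma {i\<in>I. c i = k} (topspace \<circ> K))"
      unfolding D_def by (rule inj_on_image_Int[OF injf, symmetric]) auto
    also have "\<dots> = {}" using that by auto
    finally show ?thesis .
  qed
  have Dne: "D j \<noteq> {}" if "j < Suc n" for j using Dnc[OF that] by auto
  have "npt X CC"
  proof
    show "Hausdorff_space X" by fact
    show "locally_compact_space X" by fact
    show "finite CC" unfolding CC_def by simp
    have Uset: "(\<Union>j<Suc n. Sigma {i\<in>I. c i = j} (topspace \<circ> K)) = Sigma I (topspace \<circ> K)"
    proof (rule antisym)
      show "(\<Union>j<Suc n. Sigma {i\<in>I. c i = j} (topspace \<circ> K)) \<subseteq> Sigma I (topspace \<circ> K)" by blast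
      show "Sigma I (topspace \<circ> K) \<subseteq> (\<Union>j<Suc n. Sigma {i\<in>I. c i = j} (topspace \<circ> K))"
      proof
        fix p assume p: "p \<in> Sigma I (topspace \<circ> K)"
        then obtain i a where ia: "p = (i, a)" "i \<in> I" "a \<in> topspace (K i)" by auto
        then have "p \<in> Sigma {i'\<in>I. c i' = c i} (topspace \<circ> K)" by simp
        then show "p \<in> (\<Union>j<Suc n. Sigma {i\<in>I. c i = j} (topspace \<circ> K))" using cl[of i] by blast
      qed
    qed
    have U1: "(\<Union>j<Suc n. D j) = f ` (\<Union>j<Suc n. Sigma {i\<in>I. c i = j} (topspace \<circ> K))"
      by (simp only: D_def image_UN)
    show "\<Union>CC = topspace X" unfolding CC_def U1 Uset topX by (rule refl)
    show "pairwise disjnt CC" unfolding pairwise_def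
    proof (intro ballI impI)
      fix A B assume A: "A \<in> CC" and B: "B \<in> CC" and AB: "A \<noteq> B"
      obtain j where j: "A = D j" using A unfolding CC_def by blast
      obtain k where k: "B = D k" using B unfolding CC_def by blast
      have "j \<noteq> k" using AB j k by blast
      then show "disjnt A B" unfolding disjnt_def j k by (rule Ddisj)
    qed
    show "openin X C" if Cin: "C \<in> CC" for C
    proof -
      obtain j where j: "C = D j" using Cin unfolding CC_def by blast
      show ?thesis unfolding j by (rule Dopen)
    qed
    show "\<not> compactin X C" if Cin: "C \<in> CC" for C
    proof -
      obtain j where j: "C = D j" "j < Suc n" using Cin unfolding CC_def by blast
      show ?thesis unfolding j(1) by (rule Dnc[OF j(2)])
    qed
  qed
  moreover have "card CC = Suc n"
  proof -
    have "inj_on D {..<Suc n}"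
    proof (rule inj_onI)
      fix j k assume "j \<in> {..<Suc n}" "k \<in> {..<Suc n}" "D j = D k"
      then show "j = k"
      proof (rule_tac ccontr)
        assume jk: "j \<noteq> k" and j: "j \<in> {..<Suc n}" and e: "D j = D k"
        have "D j = {}" using Ddisj[OF jk] e by simp
        then show False using Dne j by simp
      qed
    qed
    then show ?thesis unfolding CC_def by (simp add: card_image)
  qed
  ultimately show ?thesis by (intro exI[of _ CC] conjI)
qed

lemma noneq:
  assumes N1: "npt X C1" and N2: "npt X C2" and cd: "card C1 \<noteq> card C2"
  shows "\<not> equivalent_compactifications X (npt.Y X C1) (\<lambda>x. {{x}}) (npt.Y X C2) (\<lambda>x. {{x}})"
proof
  assume "equivalent_compactifications X (npt.Y X C1) (\<lambda>x. {{x}}) (npt.Y X C2) (\<lambda>x. {{x}})"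
  then obtain h where h: "homeomorphic_map (npt.Y X C1) (npt.Y X C2) h"
    and hx: "\<forall>x\<in>topspace X. h {{x}} = {{x}}"
    unfolding equivalent_compactifications_def by blast
  let ?E = "(\<lambda>x. {{x}}) ` topspace X"
  have E1: "?E \<subseteq> topspace (npt.Y X C1)" by (rule npt.E_sub[OF N1])
  have "h ` ?E = (\<lambda>x. h {{x}}) ` topspace X" by (simp only: image_image)
  also have "\<dots> = ?E" by (rule image_cong) (simp_all add: hx)
  finally have hE: "h ` ?E = ?E" .
  have inj: "inj_on h (topspace (npt.Y X C1))" by (rule homeomorphic_imp_injective_map[OF h])
  have "h ` (topspace (npt.Y X C1) - ?E) = h ` topspace (npt.Y X C1) - h ` ?E"
    by (rule inj_on_image_set_diff[OF inj]) (use E1 in auto)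
  also have "\<dots> = topspace (npt.Y X C2) - ?E"
    using homeomorphic_imp_surjective_map[OF h] hE by simp
  finally have "card (topspace (npt.Y X C2) - ?E) = card (h ` (topspace (npt.Y X C1) - ?E))" by simp
  also have "\<dots> = card (topspace (npt.Y X C1) - ?E)"
    by (rule card_image) (rule inj_on_subset[OF inj], blast)
  finally show False using npt.card_rem[OF N1] npt.card_rem[OF N2] cd by simp
qed

theorem mainTheorem6:
  fixes X :: "'a topology" and K :: "'i \<Rightarrow> 'c topology" and I :: "'i set"
  assumes "Hausdorff_space X" and "locally_compact_space X"
    and "infinite I"
    and "\<forall>i\<in>I. compact_space (K i) \<and> topspace (K i) \<noteq> {}"
    and "X homeomorphic_space sum_topology K I"
  shows "\<exists>C :: nat \<Rightarrow> ('a set set) topology \<times> ('a \<Rightarrow> 'a set set).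
           (\<forall>n. compactification X (fst (C n)) (snd (C n))) \<and>
           (\<forall>m n. m \<noteq> n \<longrightarrow>
              \<not> equivalent_compactifications X (fst (C m)) (snd (C m)) (fst (C n)) (snd (C n)))"
proof -
  have "\<forall>n. \<exists>CC. npt X CC \<and> card CC = Suc n" using partition_exists[OF assms] by blast
  then have "\<exists>F. \<forall>n. npt X (F n) \<and> card (F n) = Suc n" by (rule choice)
  then obtain F where F: "\<And>n. npt X (F n)" "\<And>n. card (F n) = Suc n" by blast
  show ?thesis
  proof (rule exI[of _ "\<lambda>n. (npt.Y X (F n), \<lambda>x. {{x}})"], intro conjI allI impI)
    fix n show "compactification X (fst (npt.Y X (F n), \<lambda>x. {{x}})) (snd (npt.Y X (F n), \<lambda>x. {{x}}))"
      using npt.compactification_Y[OF F(1)] by simp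
  next
    fix m n :: nat assume "m \<noteq> n"
    then have "card (F m) \<noteq> card (F n)" using F(2) by simp
    then show "\<not> equivalent_compactifications X (fst (npt.Y X (F m), \<lambda>x. {{x}})) (snd (npt.Y X (F m), \<lambda>x. {{x}}))
          (fst (npt.Y X (F n), \<lambda>x. {{x}})) (snd (npt.Y X (F n), \<lambda>x. {{x}}))"
      using noneq[OF F(1) F(1)] by simp
  qed
qed


end
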